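(* Under the setting and hypotheses (H1)–(H5) in the context, let $\psi_0$ be a locally uniform limit on $[0,T]\times\mathbb{R}$ of a subsequence $\psi_{\varepsilon_n}$ with $\varepsilon_n\to0$. Then $\psi_0$ is a viscosity subsolution of \[ 1=\int_0^\infty\Phi(a)e^{a\,\partial_t\psi(t,x)}\,\mathrm{d}a\int_{\mathbb{R}}\omega(z)e^{z\,\partial_x\psi(t,x)}\,\mathrm{d}z, \] i.e. for every $\Psi\in C^2(\mathbb{R}_+\times\mathbb{R})$ such that $\psi_0-\Psi$ has a local maximum at $(t_0,x_0)$, one has $1\ge\int_0^\infty\int_{\mathbb{R}}\Phi(a)\omega(z)\exp[a\partial_t\Psi(t_0,x_0)+z\partial_x\Psi(t_0,x_0)]\,\mathrm{d}z\,\mathrm{d}a$.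
   Context: Fix $\mu\in(0,1)$, $\sigma>0$, $T>0$. Let $\beta(a)=\mu/(1+a)$ for $a\ge0$, $\Phi(a)=\beta(a)\exp(-\int_0^a\beta(s)\,\mathrm{d}s)=\mu(1+a)^{-1-\mu}$, and $\omega(z)=\frac{1}{\sigma\sqrt{2\pi}}e^{-z^2/(2\sigma^2)}$. For each $\varepsilon>0$ the initial datum is a function $\phi^0_\varepsilon(x,a)$, $x\in\mathbb{R}$, $a\in[0,1)$, of the form $\phi_\varepsilon^0(x,a)=v(x)+\varepsilon\eta(x,a)$, where: (H1) $v$ is bounded; (H2) $a\mapsto\exp(-\inf_x\eta(x,a))$ belongs to $L^1$; (H3) there is $C>0$ such that for all $\varepsilon>0$ and $x\in\mathbb{R}$, $\int_0^1\int_{\mathbb{R}}\Phi(a)\omega(z)e^{\int_0^a\beta}e^{-\eta(x-\varepsilon z,a)}\,\mathrm{d}z\,\mathrm{d}a>e^{-C/\varepsilon}$; (H4) $\phi^0_\varepsilon$ is Lipschitz in $x$ uniformly in $\varepsilon\in(0,1)$; (H5) there is $\mathfrak{C}_{xx}\in\mathbb{R}$ with $\partial_x^2\phi_\varepsilon^0\le\mathfrak{C}_{xx}$ in the sense of distributions. Let $n_\varepsilon(t,x,a)\ge0$ solve $\partial_t n_\varepsilon+\frac1\varepsilon\partial_a n_\varepsilon+\frac1\varepsilon\beta(a)n_\varepsilon=0$ for $t\ge0,a>0,x\in\mathbb{R}$, with $n_\varepsilon(t,x,0)=\int_0^\infty\int_{\mathbb{R}}\beta(a)\omega(z)n_\varepsilon(t,x-\varepsilon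 z,a)\,\mathrm{d}z\,\mathrm{d}a$ and $n_\varepsilon(0,x,a)=\exp(-\phi^0_\varepsilon(x,a)/\varepsilon)$ for $a\in[0,1)$, $n_\varepsilon(0,x,a)=0$ for $a\ge1$. Set $\phi_\varepsilon=-\varepsilon\ln n_\varepsilon$ and $\psi_\varepsilon(t,x)=\phi_\varepsilon(t,x,0)$. Equivalently, $\psi_\varepsilon$ satisfies for $t>0$: $1=\int_0^{t/\varepsilon}\!\int_{\mathbb{R}}\Phi(a)\omega(z)e^{[\psi_\varepsilon(t,x)-\psi_\varepsilon(t-\varepsilon a,x-\varepsilon z)]/\varepsilon}\,\mathrm{d}z\,\mathrm{d}a+\int_0^1\!\int_{\mathbb{R}}\Phi(a+t/\varepsilon)\omega(z)e^{[\psi_\varepsilon(t,x)-\phi^0_\varepsilon(x-\varepsilon z,a)]/\varepsilon+\int_0^a\beta}\,\mathrm{d}z\,\mathrm{d}a$. *)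

theory Defs
  imports "HOL-Analysis.Analysis"
begin

definition beta :: "real \<Rightarrow> real \<Rightarrow> real" where
  "beta mu a = mu / (1 + a)"

definition Bint :: "real \<Rightarrow> real \<Rightarrow> real" where
  "Bint mu a = integral {0..a} (beta mu)"

text \<open>Phi(a) = beta(a) exp(-int_0^a beta) = mu (1+a)^(-1-mu).\<close>
definition Phi :: "real \<Rightarrow> real \<Rightarrow> real" where
  "Phi mu a = beta mu a * exp (- Bint mu a)"

definition omega :: "real \<Rightarrow> real \<Rightarrow> real" where
  "omega sg z = exp (- (z ^ 2) / (2 * sg ^ 2)) / (sg * sqrt (2 * pi))"

definition test_fun :: "(real \<Rightarrow> real) \<Rightarrow> bool" where
  "test_fun g \<longleftrightarrow> (\<forall>n x. ((deriv ^^ n) g) differentiable (at x))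
                 \<and> (\<exists>R. \<forall>x. R < \<bar>x\<bar> \<longrightarrow> g x = 0)"

text \<open>f'' \<le> C in the sense of distributions on the real line.\<close>
definition dist_d2_le :: "(real \<Rightarrow> real) \<Rightarrow> real \<Rightarrow> bool" where
  "dist_d2_le f C \<longleftrightarrow>
     (\<forall>g. test_fun g \<and> (\<forall>x. 0 \<le> g x) \<longrightarrow>
        (\<integral>x. f x * (deriv ^^ 2) g x \<partial>lborel) \<le> C * (\<integral>x. g x \<partial>lborel))"

definition C1_on :: "(real \<times> real) set \<Rightarrow> (real \<times> real \<Rightarrow> real) \<Rightarrow> bool" where
  "C1_on S f \<longleftrightarrow> (\<exists>Dt Dx. continuous_on S Dt \<and> continuous_on S Dx \<and>
      (\<forall>p\<in>S. (f has_derivative (\<lambda>h. Dt p * fst h + Dx p * snd h)) (at p)))"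

definition C2_on :: "(real \<times> real) set \<Rightarrow> (real \<times> real \<Rightarrow> real) \<Rightarrow> bool" where
  "C2_on S f \<longleftrightarrow> (\<exists>Dt Dx. C1_on S Dt \<and> C1_on S Dx \<and>
      (\<forall>p\<in>S. (f has_derivative (\<lambda>h. Dt p * fst h + Dx p * snd h)) (at p)))"

end

theory Submission
  imports Defs
begin
lemma seg_deriv:
  fixes Psi :: "real \<times> real \<Rightarrow> real"
  assumes "(Psi has_derivative (\<lambda>h. A * fst h + B * snd h)) (at (t - s*a, x - s*z))"
  shows "((\<lambda>s. Psi (t - s*a, x - s*z)) has_real_derivative (-(A*a + B*z))) (at s)"
proof -
  have d: "((\<lambda>s. (t - s*a, x - s*z)) has_derivative (\<lambda>h. (-(h*a), -(h*z)))) (at s)"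
    by (auto intro!: derivative_eq_intros)
  have "((\<lambda>s. Psi (t - s*a, x - s*z)) has_derivative (\<lambda>h. A * fst (-(h*a), -(h*z)) + B * snd (-(h*a), -(h*z)))) (at s)"
    using has_derivative_compose[OF d assms] .
  moreover have "(\<lambda>h. A * fst (-(h*a), -(h*z)) + B * snd (-(h*a), -(h*z))) = (*) (-(A*a + B*z))"
    by (auto simp: algebra_simps)
  ultimately show ?thesis by (simp add: has_field_derivative_def)
qed

lemma Bint_mono: assumes "0 < mu" shows "mono (Bint mu)"
proof (rule monoI)
  fix a b :: real assume ab: "a \<le> b"
  have c: "\<And>b. continuous_on {0..b} (beta mu)" unfolding beta_def
    by (intro continuous_intros) auto
  have ib: "\<And>b. beta mu integrable_on {0..b}"
    by (rule integrable_continuous_interval[OF c])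
  show "Bint mu a \<le> Bint mu b"
  proof (cases "0 \<le> a")
    case False then show ?thesis
      unfolding Bint_def using ab ib[of b]
      by (cases "0 \<le> b") (auto intro!: integral_nonneg simp: beta_def assms less_imp_le)
  next
    case True
    have "integral {0..a} (beta mu) \<le> integral {0..b} (beta mu)"
      apply (rule integral_subset_le)
      using ab True ib
      by (auto simp: beta_def assms less_imp_le)
    then show ?thesis unfolding Bint_def .
  qed
qed

lemma Phi_meas: assumes "0 < mu" shows "Phi mu \<in> borel_measurable borel"
proof -
  have "Bint mu \<in> borel_measurable borel" by (rule borel_measurable_mono[OF Bint_mono[OF assms]])
  then show ?thesis unfolding Phi_def[abs_def] beta_def by measurable
qed

lemma Phi_nonneg: "0 < mu \<Longrightarrow> 0 \<le> a \<Longrightarrow> 0 \<le> Phi mu a"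
  unfolding Phi_def beta_def by auto

lemma omega_pos: "0 < sg \<Longrightarrow> 0 < omega sg z"
  unfolding omega_def by auto

lemma dist_pair_le: "dist (a::real, b::real) (c, d) \<le> \<bar>a - c\<bar> + \<bar>b - d\<bar>"
proof -
  have "dist (a, b) (c, d) = sqrt ((dist a c)\<^sup>2 + (dist b d)\<^sup>2)" by (simp add: dist_Pair_Pair)
  also have "\<dots> \<le> dist a c + dist b d" using sqrt_sum_squares_le_sum_abs[of "dist a c" "dist b d"] by simp 
  finally show ?thesis by (simp add: dist_real_def)
qed

lemma key:
  fixes psi :: "real \<Rightarrow> real \<Rightarrow> real \<Rightarrow> real"
    and psi0 :: "real \<Rightarrow> real \<Rightarrow> real"
    and Psi :: "real \<times> real \<Rightarrow> real"
    and epsn :: "nat \<Rightarrow> real"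
    and Dt Dx :: "real \<times> real \<Rightarrow> real"
  assumes epsn_pos: "\<And>n. 0 < epsn n"
    and epsn_lim: "epsn \<longlonglongrightarrow> 0"
    and conv: "\<And>K. compact K \<Longrightarrow> K \<subseteq> {0..T} \<times> UNIV \<Longrightarrow>
        uniform_limit K (\<lambda>n p. psi (epsn n) (fst p) (snd p)) (\<lambda>p. psi0 (fst p) (snd p)) sequentially"
    and t0: "0 < t0" "t0 < T"
    and locmax: "\<exists>r>0. \<forall>t x. (t, x) \<in> ball (t0, x0) r \<and> 0 \<le> t \<and> t \<le> T \<longrightarrow>
        psi0 t x - Psi (t, x) \<le> psi0 t0 x0 - Psi (t0, x0)"
    and Pder: "\<And>p. p \<in> {0<..} \<times> UNIV \<Longrightarrow> (Psi has_derivative (\<lambda>h. Dt p * fst h + Dx p * snd h)) (at p)"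
    and cDt: "isCont Dt (t0, x0)" and cDx: "isCont Dx (t0, x0)"
    and Dt0: "Dt (t0, x0) = pt" and Dx0: "Dx (t0, x0) = px"
    and K: "1 \<le> K" and del: "0 < del"
  shows "\<exists>eps>0. \<exists>t>0. \<exists>x. \<forall>a z. 0 \<le> a \<and> a \<le> K \<and> \<bar>z\<bar> \<le> K \<longrightarrow>
           a \<le> t / eps \<and> a * pt + z * px - del \<le> (psi eps t x - psi eps (t - eps * a) (x - eps * z)) / eps"
proof -
  obtain r where r: "r > 0" and lm: "\<And>t x. (t, x) \<in> ball (t0, x0) r \<Longrightarrow> 0 \<le> t \<Longrightarrow> t \<le> T \<Longrightarrow>
        psi0 t x - Psi (t, x) \<le> psi0 t0 x0 - Psi (t0, x0)" using locmax by blast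
  define p0 where "p0 = (t0, x0)"
  define c where "c = del / (8 * K)"
  have c: "c > 0" using del K by (simp add: c_def)
  obtain rt where rt: "rt > 0" "\<And>p. dist p p0 < rt \<Longrightarrow> \<bar>Dt p - pt\<bar> < c"
    using cDt c unfolding continuous_at_eps_delta p0_def Dt0 dist_real_def by blast
  obtain rx where rx: "rx > 0" "\<And>p. dist p p0 < rx \<Longrightarrow> \<bar>Dx p - px\<bar> < c"
    using cDx c unfolding continuous_at_eps_delta p0_def Dx0 dist_real_def by blast
  define r1 where "r1 = min (r/2) (min (t0/2) (T - t0))"
  have r1: "r1 > 0" "r1 < r" "r1 \<le> t0/2" "r1 \<le> T - t0" using r t0 unfolding r1_def by (auto simp: min_def)
  define rho where "rho = min rt (min rx r1)"
  have rho: "rho > 0" "rho \<le> rt" "rho \<le> rx" "rho \<le> r1" using rt rx r1 by (auto simp: rho_def)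
  define B where "B = cball p0 r1"
  have Bc: "compact B" by (simp add: B_def)
  have Bfst: "\<And>p. p \<in> B \<Longrightarrow> t0/2 \<le> fst p \<and> fst p \<le> T"
  proof -
    fix p assume "p \<in> B"
    then have "dist p p0 \<le> r1" by (simp add: B_def dist_commute)
    moreover have "\<bar>fst p - t0\<bar> \<le> dist p p0" unfolding p0_def
      by (metis dist_fst_le dist_real_def fst_conv)
    ultimately show "t0/2 \<le> fst p \<and> fst p \<le> T" using r1 by auto
  qed
  have BT: "B \<subseteq> {0..T} \<times> UNIV" using Bfst t0 by (force simp: mem_Times_iff)
  have Bball: "\<And>p. p \<in> B \<Longrightarrow> p \<in> ball p0 r" using r1 by (auto simp: B_def dist_commute)
  define M0 where "M0 = psi0 t0 x0 - Psi (t0, x0)"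
  have lmB: "\<And>p. p \<in> B \<Longrightarrow> psi0 (fst p) (snd p) - Psi p \<le> M0"
  proof -
    fix p assume p: "p \<in> B"
    have "0 \<le> fst p" "fst p \<le> T" using Bfst[OF p] t0 by auto
    then show "psi0 (fst p) (snd p) - Psi p \<le> M0"
      using lm[of "fst p" "snd p"] Bball[OF p] by (simp add: M0_def p0_def)
  qed
  define dT where "dT = min (rho/4) (del / (16 * K))"
  have dT: "dT > 0" "dT \<le> rho/4" "dT \<le> del / (16*K)" using rho del K by (auto simp: dT_def)
  define e1 where "e1 = dT^2/4"
  have e1: "e1 > 0" using dT by (simp add: e1_def)
  define E where "E = min (rho/(4*K)) (min (del/(8*K^2)) (min (t0/(2*K)) (dT^2/del)))"
  have E: "E > 0" using rho del K t0 dT by (auto simp: E_def)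
  have ev1: "\<forall>\<^sub>F n in sequentially. \<forall>p\<in>B. dist (psi (epsn n) (fst p) (snd p)) (psi0 (fst p) (snd p)) < e1"
    using conv[OF Bc BT] e1 unfolding uniform_limit_iff by blast
  have ev2: "\<forall>\<^sub>F n in sequentially. dist (epsn n) 0 < E"
    using epsn_lim E unfolding tendsto_iff by blast
  obtain n where n1: "\<forall>p\<in>B. dist (psi (epsn n) (fst p) (snd p)) (psi0 (fst p) (snd p)) < e1"
    and n2: "dist (epsn n) 0 < E"
    using eventually_happens'[OF trivial_limit_sequentially, OF eventually_conj[OF ev1 ev2]] by blast
  define eps where "eps = epsn n"
  have eps: "0 < eps" "eps < rho/(4*K)" "eps < del/(8*K^2)" "eps < t0/(2*K)" "eps < dT^2/del"
    using epsn_pos[of n] n2 by (auto simp: eps_def E_def dist_real_def)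
  define q where "q p = (fst p - t0)^2 + (snd p - x0)^2" for p :: "real \<times> real"
  define F where "F p = psi eps (fst p) (snd p) - (Psi p + q p)" for p
  have Fb: "\<And>p. p \<in> B \<Longrightarrow> F p \<le> M0 + e1"
  proof -
    fix p assume p: "p \<in> B"
    have "psi eps (fst p) (snd p) < psi0 (fst p) (snd p) + e1" using n1 p by (auto simp: eps_def dist_real_def)
    moreover have "q p \<ge> 0" by (simp add: q_def)
    ultimately show "F p \<le> M0 + e1" using lmB[OF p] by (simp add: F_def)
  qed
  have bdd: "bdd_above (F ` B)" using Fb by (auto intro!: bdd_aboveI2)
  have p0B: "p0 \<in> B" using r1 by (simp add: B_def)
  have Bne: "B \<noteq> {}" using p0B by auto
  define M where "M = (SUP p\<in>B. F p)"
  have "M - (del/4) * eps < M" using del eps by simp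
  then obtain pn where pnB: "pn \<in> B" and pn: "M - (del/4) * eps < F pn"
    unfolding M_def using less_cSUP_iff[OF Bne bdd] by blast
  have FM: "\<And>s. s \<in> B \<Longrightarrow> F s < F pn + (del/4) * eps"
    using cSUP_upper[OF _ bdd] pn unfolding M_def by fastforce
  obtain tn xn where pn_eq: "pn = (tn, xn)" by (cases pn)
  have qpn: "q pn < dT^2"
  proof -
    have a1: "psi eps tn xn < psi0 tn xn + e1" using n1 pnB by (auto simp: eps_def dist_real_def pn_eq)
    have a2: "psi eps t0 x0 > psi0 t0 x0 - e1" using n1 p0B by (auto simp: eps_def dist_real_def p0_def)
    have a3: "psi0 tn xn - Psi pn \<le> M0" using lmB[OF pnB] by (simp add: pn_eq)
    have a4: "F p0 < F pn + (del/4) * eps" using FM[OF p0B] .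
    have "q p0 = 0" by (simp add: q_def p0_def)
    then have h1: "q pn < 2 * e1 + (del/4) * eps"
      using a1 a2 a3 a4 by (simp add: F_def pn_eq p0_def M0_def)
    have h2: "(del/4) * eps < dT^2/4" using eps(5) del by (simp add: field_simps)
    have "dT^2 > 0" using dT by simp
    with h1 h2 show ?thesis unfolding e1_def by linarith
  qed
  have tn: "\<bar>tn - t0\<bar> < dT" and xn: "\<bar>xn - x0\<bar> < dT"
  proof -
    have "(tn - t0)^2 < dT^2" "(xn - x0)^2 < dT^2" using qpn by (auto simp: q_def pn_eq intro: add_nonneg_nonneg le_less_trans[rotated])
    then show "\<bar>tn - t0\<bar> < dT" "\<bar>xn - x0\<bar> < dT" using dT(1)
      power_less_imp_less_base[of "\<bar>tn - t0\<bar>" 2 dT] power_less_imp_less_base[of "\<bar>xn - x0\<bar>" 2 dT] by auto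
  qed
  have pn_t: "tn \<ge> t0/2" using Bfst[OF pnB] by (simp add: pn_eq)
  have seg: "\<And>a z sg. 0 \<le> a \<Longrightarrow> a \<le> K \<Longrightarrow> \<bar>z\<bar> \<le> K \<Longrightarrow> 0 \<le> sg \<Longrightarrow> sg \<le> eps \<Longrightarrow>
      dist (tn - sg * a, xn - sg * z) p0 < rho"
  proof -
    fix a z sg :: real assume h: "0 \<le> a" "a \<le> K" "\<bar>z\<bar> \<le> K" "0 \<le> sg" "sg \<le> eps"
    have "sg * a \<le> eps * K" using h by (intro mult_mono) auto
    moreover have "\<bar>sg * z\<bar> \<le> eps * K" using h by (auto simp: abs_mult intro!: mult_mono)
    moreover have "eps * K < rho/4" using eps(2) K by (simp add: field_simps)
    moreover have "dist (tn - sg * a, xn - sg * z) p0 \<le> \<bar>tn - sg * a - t0\<bar> + \<bar>xn - sg * z - x0\<bar>"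
      unfolding p0_def by (rule dist_pair_le)
    moreover have "0 \<le> sg * a" using h by simp
    moreover have "\<bar>tn - sg * a - t0\<bar> \<le> \<bar>tn - t0\<bar> + \<bar>sg * a\<bar>" by arith
    moreover have "\<bar>xn - sg * z - x0\<bar> \<le> \<bar>xn - x0\<bar> + \<bar>sg * z\<bar>" by arith
    ultimately show "dist (tn - sg * a, xn - sg * z) p0 < rho" using tn xn dT h by linarith
  qed
  have inS: "\<And>p. dist p p0 < rho \<Longrightarrow> p \<in> {0<..} \<times> UNIV"
  proof -
    fix p :: "real \<times> real" assume "dist p p0 < rho"
    moreover have "\<bar>fst p - t0\<bar> \<le> dist p p0" unfolding p0_def
      by (metis dist_fst_le dist_real_def fst_conv)
    ultimately show "p \<in> {0<..} \<times> UNIV" using rho r1 t0 by (cases p) auto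
  qed
  have main: "\<forall>a z. 0 \<le> a \<and> a \<le> K \<and> \<bar>z\<bar> \<le> K \<longrightarrow>
           a \<le> tn / eps \<and> a * pt + z * px - del \<le> (psi eps tn xn - psi eps (tn - eps * a) (xn - eps * z)) / eps"
  proof (intro allI impI)
    fix a z assume az: "0 \<le> a \<and> a \<le> K \<and> \<bar>z\<bar> \<le> K"
    have "a * eps \<le> K * eps" using az eps by (intro mult_right_mono) auto
    moreover have "K * eps < t0/2" using eps(4) K by (simp add: field_simps)
    ultimately have "a * eps \<le> tn" using pn_t by linarith
    then have res1: "a \<le> tn / eps" using eps(1) by (simp add: pos_le_divide_eq)
    define s where "s = (tn - eps * a, xn - eps * z)"
    have sB: "s \<in> B" using seg[of a z eps] az eps rho unfolding s_def B_def
      by (auto simp: dist_commute)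
    have Fs: "F s < F pn + (del/4) * eps" by (rule FM[OF sB])
    define h where "h sg = Psi (tn - sg * a, xn - sg * z)" for sg
    have hd: "\<And>sg. 0 \<le> sg \<Longrightarrow> sg \<le> eps \<Longrightarrow> DERIV h sg :> (-(Dt (tn - sg * a, xn - sg * z) * a + Dx (tn - sg * a, xn - sg * z) * z))"
      unfolding h_def by (rule seg_deriv, rule Pder, rule inS, rule seg) (use az in auto)
    obtain sg where sg: "0 < sg" "sg < eps" and
      mvt: "h eps - h 0 = (eps - 0) * (-(Dt (tn - sg * a, xn - sg * z) * a + Dx (tn - sg * a, xn - sg * z) * z))"
      using MVT2[OF eps(1) hd] by blast
    define xi where "xi = (tn - sg * a, xn - sg * z)"
    have dxi: "dist xi p0 < rho" unfolding xi_def using seg[of a z sg] az sg by auto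
    have e_t: "\<bar>Dt xi - pt\<bar> < c" using rt(2)[of xi] dxi rho by auto
    have e_x: "\<bar>Dx xi - px\<bar> < c" using rx(2)[of xi] dxi rho by auto
    have m1: "\<bar>a * (Dt xi - pt)\<bar> \<le> K * c" using az e_t by (auto simp: abs_mult intro!: mult_mono)
    have m2: "\<bar>z * (Dx xi - px)\<bar> \<le> K * c" using az e_x by (auto simp: abs_mult intro!: mult_mono)
    have Kc: "K * c = del / 8" using K by (simp add: c_def)
    have lin: "Dt xi * a + Dx xi * z \<ge> a * pt + z * px - del/4"
      using m1 m2 Kc by (auto simp: algebra_simps abs_le_iff)
    have Psi_diff: "Psi pn - Psi s = eps * (Dt xi * a + Dx xi * z)"
    proof -
      have "h eps - h 0 = - (eps * (Dt xi * a + Dx xi * z))" using mvt unfolding xi_def by (simp add: algebra_simps)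
      then show ?thesis unfolding h_def s_def pn_eq by simp
    qed
    have q1: "\<bar>a * (tn - t0)\<bar> \<le> K * dT" using az tn by (auto simp: abs_mult intro!: mult_mono)
    have q2: "\<bar>z * (xn - x0)\<bar> \<le> K * dT" using az xn by (auto simp: abs_mult intro!: mult_mono)
    have q3: "a^2 \<le> K^2" using az by (intro power_mono) auto
    have q4: "z^2 \<le> K^2" using az by (metis abs_le_square_iff abs_of_nonneg K order_trans zero_le_one)
    have KdT: "K * dT \<le> del/16" using dT(3) K by (simp add: field_simps)
    have eK: "eps * K^2 \<le> del/8" using eps(3) K by (simp add: field_simps)
    have qeq: "q pn - q s = eps * (2 * (a * (tn - t0)) + 2 * (z * (xn - x0)) - eps * (a^2 + z^2))"
      unfolding q_def s_def pn_eq by (simp add: power2_eq_square algebra_simps)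
    have "eps * (a^2 + z^2) \<le> eps * (2 * K^2)" using q3 q4 eps(1) by simp
    then have qb: "q pn - q s \<ge> eps * (- (del/2))"
      unfolding qeq using q1 q2 KdT eK eps(1)
      by (intro mult_left_mono) (auto simp: abs_le_iff algebra_simps)
    have "psi eps tn xn - psi eps (tn - eps * a) (xn - eps * z) >
        (Psi pn - Psi s) + (q pn - q s) - (del/4) * eps"
      using Fs unfolding F_def s_def pn_eq by simp
    moreover have "eps * (Dt xi * a + Dx xi * z) \<ge> eps * (a * pt + z * px - del/4)"
      using lin eps(1) by (intro mult_left_mono) auto
    ultimately have "psi eps tn xn - psi eps (tn - eps * a) (xn - eps * z) \<ge> eps * (a * pt + z * px - del)"
      using Psi_diff qb by (simp add: algebra_simps)
    then have "a * pt + z * px - del \<le> (psi eps tn xn - psi eps (tn - eps * a) (xn - eps * z)) / eps"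
      using eps(1) by (simp add: pos_le_divide_eq mult.commute)
    with res1 show "a \<le> tn / eps \<and> a * pt + z * px - del \<le> (psi eps tn xn - psi eps (tn - eps * a) (xn - eps * z)) / eps" by simp
  qed
  have "0 < tn" using pn_t t0 by simp
  with main eps(1) show ?thesis by blast
qed

lemma bound:
  fixes psi :: "real \<Rightarrow> real \<Rightarrow> real \<Rightarrow> real" and R :: "real \<Rightarrow> real \<Rightarrow> real \<Rightarrow> ennreal"
  assumes mu: "0 < mu" and sg: "0 < sg"
    and psi_eq: "\<And>eps t x. eps > 0 \<Longrightarrow> t > 0 \<Longrightarrow>
        1 = (\<integral>\<^sup>+ a\<in>{0..t/eps}. (\<integral>\<^sup>+ z. ennreal (Phi mu a * omega sg z
                 * exp ((psi eps t x - psi eps (t - eps * a) (x - eps * z)) / eps)) \<partial>lborel) \<partial>lborel)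
          + R eps t x"
    and key: "\<exists>eps>0. \<exists>t>0. \<exists>x. \<forall>a z. 0 \<le> a \<and> a \<le> K \<and> \<bar>z\<bar> \<le> K \<longrightarrow>
           a \<le> t / eps \<and> a * pt + z * px - del \<le> (psi eps t x - psi eps (t - eps * a) (x - eps * z)) / eps"
  shows "(\<integral>\<^sup>+ a. (\<integral>\<^sup>+ z. ennreal (Phi mu a * omega sg z * exp (a * pt + z * px) * exp (- del))
            * indicator {-K..K} z * indicator {0..K} a \<partial>lborel) \<partial>lborel) \<le> 1"
proof -
  obtain eps t x where eps: "eps > 0" "t > 0" and
    k: "\<And>a z. 0 \<le> a \<Longrightarrow> a \<le> K \<Longrightarrow> \<bar>z\<bar> \<le> K \<Longrightarrow>
           a \<le> t / eps \<and> a * pt + z * px - del \<le> (psi eps t x - psi eps (t - eps * a) (x - eps * z)) / eps"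
    using key by blast
  have "(\<integral>\<^sup>+ a. (\<integral>\<^sup>+ z. ennreal (Phi mu a * omega sg z * exp (a * pt + z * px) * exp (- del))
            * indicator {-K..K} z * indicator {0..K} a \<partial>lborel) \<partial>lborel)
     \<le> (\<integral>\<^sup>+ a\<in>{0..t/eps}. (\<integral>\<^sup>+ z. ennreal (Phi mu a * omega sg z
                 * exp ((psi eps t x - psi eps (t - eps * a) (x - eps * z)) / eps)) \<partial>lborel) \<partial>lborel)"
  proof (rule nn_integral_mono)
    fix a :: real
    show "(\<integral>\<^sup>+ z. ennreal (Phi mu a * omega sg z * exp (a * pt + z * px) * exp (- del))
            * indicator {-K..K} z * indicator {0..K} a \<partial>lborel)
       \<le> (\<integral>\<^sup>+ z. ennreal (Phi mu a * omega sg z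
                 * exp ((psi eps t x - psi eps (t - eps * a) (x - eps * z)) / eps)) \<partial>lborel) * indicator {0..t/eps} a"
    proof (cases "0 \<le> a \<and> a \<le> K")
      case False then show ?thesis by simp
    next
      case True
      have at: "a \<le> t / eps" using k[of a 0] True by auto
      have "(\<integral>\<^sup>+ z. ennreal (Phi mu a * omega sg z * exp (a * pt + z * px) * exp (- del))
            * indicator {-K..K} z * indicator {0..K} a \<partial>lborel)
          \<le> (\<integral>\<^sup>+ z. ennreal (Phi mu a * omega sg z
                 * exp ((psi eps t x - psi eps (t - eps * a) (x - eps * z)) / eps)) \<partial>lborel)"
      proof (rule nn_integral_mono)
        fix z :: real
        show "ennreal (Phi mu a * omega sg z * exp (a * pt + z * px) * exp (- del))
            * indicator {-K..K} z * indicator {0..K} a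
          \<le> ennreal (Phi mu a * omega sg z
                 * exp ((psi eps t x - psi eps (t - eps * a) (x - eps * z)) / eps))"
        proof (cases "\<bar>z\<bar> \<le> K")
          case False then have "z \<notin> {-K..K}" by auto
          then show ?thesis by simp
        next
          case zK: True
          have e: "exp (a * pt + z * px) * exp (- del) \<le> exp ((psi eps t x - psi eps (t - eps * a) (x - eps * z)) / eps)"
            using k[of a z] True zK by (simp add: exp_add[symmetric])
          have "0 \<le> Phi mu a * omega sg z" using Phi_nonneg[OF mu, of a] omega_pos[OF sg, of z] True by simp
          then have "Phi mu a * omega sg z * (exp (a * pt + z * px) * exp (- del))
             \<le> Phi mu a * omega sg z * exp ((psi eps t x - psi eps (t - eps * a) (x - eps * z)) / eps)"
            by (rule mult_left_mono[OF e])
          then have "ennreal (Phi mu a * omega sg z * exp (a * pt + z * px) * exp (- del))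
             \<le> ennreal (Phi mu a * omega sg z * exp ((psi eps t x - psi eps (t - eps * a) (x - eps * z)) / eps))"
            by (intro ennreal_leI) (simp add: mult.assoc)
          moreover have "z \<in> {-K..K}" "a \<in> {0..K}" using zK True by auto
          ultimately show ?thesis by simp
        qed
      qed
      then show ?thesis using True at eps by (simp add: indicator_def)
    qed
  qed
  also have "\<dots> \<le> 1"
    apply (subst psi_eq[OF eps]) by (rule add_increasing2) auto
  finally show ?thesis .
qed

theorem proposition6:
  fixes mu sg T :: real
    and v :: "real \<Rightarrow> real"
    and eta :: "real \<Rightarrow> real \<Rightarrow> real"
    and psi :: "real \<Rightarrow> real \<Rightarrow> real \<Rightarrow> real"
    and epsn :: "nat \<Rightarrow> real"
    and psi0 :: "real \<Rightarrow> real \<Rightarrow> real"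
    and Psi :: "real \<times> real \<Rightarrow> real"
    and t0 x0 pt px :: real
  defines "phi0 \<equiv> (\<lambda>eps x a. v x + eps * eta x a)"
  assumes mu: "0 < mu" "mu < 1"
    and sg: "0 < sg"
    and T: "0 < T"
    and H1: "bounded (range v)"
    and H2: "(\<lambda>a. indicator {0..<1} a * (SUP x. ennreal (exp (- eta x a)))) \<in> borel_measurable lborel"
            "(\<integral>\<^sup>+ a\<in>{0..<1}. (SUP x. ennreal (exp (- eta x a))) \<partial>lborel) < \<infinity>"
    and H3: "\<exists>C>0. \<forall>eps>0. \<forall>x.
              (\<integral>\<^sup>+ a\<in>{0..<1}. (\<integral>\<^sup>+ z. ennreal (Phi mu a * omega sg z * exp (Bint mu a)
                   * exp (- eta (x - eps * z) a)) \<partial>lborel) \<partial>lborel)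
              > ennreal (exp (- C / eps))"
    and H4: "\<exists>L. \<forall>eps\<in>{0<..<1}. \<forall>a\<in>{0..<1}. \<forall>x y.
              \<bar>phi0 eps x a - phi0 eps y a\<bar> \<le> L * \<bar>x - y\<bar>"
    and H5: "\<exists>Cxx. \<forall>eps>0. \<forall>a\<in>{0..<1}. dist_d2_le (\<lambda>x. phi0 eps x a) Cxx"
    and psi_init: "\<And>eps x. eps > 0 \<Longrightarrow> psi eps 0 x = phi0 eps x 0"
    and psi_eq: "\<And>eps t x. eps > 0 \<Longrightarrow> t > 0 \<Longrightarrow>
        1 = (\<integral>\<^sup>+ a\<in>{0..t/eps}. (\<integral>\<^sup>+ z. ennreal (Phi mu a * omega sg z
                 * exp ((psi eps t x - psi eps (t - eps * a) (x - eps * z)) / eps)) \<partial>lborel) \<partial>lborel)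
          + (\<integral>\<^sup>+ a\<in>{0..<1}. (\<integral>\<^sup>+ z. ennreal (Phi mu (a + t/eps) * omega sg z
                 * exp ((psi eps t x - phi0 eps (x - eps * z) a) / eps + Bint mu a)) \<partial>lborel) \<partial>lborel)"
    and epsn_pos: "\<And>n. 0 < epsn n"
    and epsn_lim: "epsn \<longlonglongrightarrow> 0"
    and conv: "\<And>K. compact K \<Longrightarrow> K \<subseteq> {0..T} \<times> UNIV \<Longrightarrow>
        uniform_limit K (\<lambda>n p. psi (epsn n) (fst p) (snd p)) (\<lambda>p. psi0 (fst p) (snd p)) sequentially"
    and Psi_C2: "C2_on ({0<..} \<times> UNIV) Psi"
    and Psi_deriv: "(Psi has_derivative (\<lambda>h. pt * fst h + px * snd h)) (at (t0, x0))"
    and t0: "0 < t0" "t0 < T"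
    and locmax: "\<exists>r>0. \<forall>t x. (t, x) \<in> ball (t0, x0) r \<and> 0 \<le> t \<and> t \<le> T \<longrightarrow>
        psi0 t x - Psi (t, x) \<le> psi0 t0 x0 - Psi (t0, x0)"
  shows "(\<integral>\<^sup>+ a\<in>{0..}. (\<integral>\<^sup>+ z. ennreal (Phi mu a * omega sg z
            * exp (a * pt + z * px)) \<partial>lborel) \<partial>lborel) \<le> 1"
proof -
  define S where "S = ({0<..} \<times> UNIV :: (real \<times> real) set)"
  obtain Dt Dx where C1t: "C1_on S Dt" and C1x: "C1_on S Dx"
    and Pder: "\<And>p. p \<in> S \<Longrightarrow> (Psi has_derivative (\<lambda>h. Dt p * fst h + Dx p * snd h)) (at p)"
    using Psi_C2 unfolding C2_on_def S_def by blast
  have p0S: "(t0, x0) \<in> S" using t0 by (simp add: S_def)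
  have cDt: "isCont Dt (t0, x0)"
  proof -
    obtain A B where "\<forall>p\<in>S. (Dt has_derivative (\<lambda>h. A p * fst h + B p * snd h)) (at p)"
      using C1t unfolding C1_on_def by blast
    then show ?thesis using p0S has_derivative_continuous by blast
  qed
  have cDx: "isCont Dx (t0, x0)"
  proof -
    obtain A B where "\<forall>p\<in>S. (Dx has_derivative (\<lambda>h. A p * fst h + B p * snd h)) (at p)"
      using C1x unfolding C1_on_def by blast
    then show ?thesis using p0S has_derivative_continuous by blast
  qed
  have L: "(\<lambda>h. Dt (t0, x0) * fst h + Dx (t0, x0) * snd h) = (\<lambda>h. pt * fst h + px * snd h)"
    using has_derivative_unique[OF Pder[OF p0S] Psi_deriv] .
  have Dt0: "Dt (t0, x0) = pt" using fun_cong[OF L, of "(1, 0)"] by simp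
  have Dx0: "Dx (t0, x0) = px" using fun_cong[OF L, of "(0, 1)"] by simp
  define g where "g a z = Phi mu a * omega sg z * exp (a * pt + z * px)" for a z
  define f where "f k a z = ennreal (g a z * exp (- inverse (real (Suc k))))
      * indicator {- real (Suc k)..real (Suc k)} z * indicator {0..real (Suc k)} a" for k a z
  have bnd: "(\<integral>\<^sup>+ a. (\<integral>\<^sup>+ z. f k a z \<partial>lborel) \<partial>lborel) \<le> 1" for k
  proof -
    have "1 \<le> real (Suc k)" by simp
    moreover have "0 < inverse (real (Suc k))" by simp
    ultimately have ky: "\<exists>eps>0. \<exists>t>0. \<exists>x. \<forall>a z. 0 \<le> a \<and> a \<le> real (Suc k) \<and> \<bar>z\<bar> \<le> real (Suc k) \<longrightarrow>
           a \<le> t / eps \<and> a * pt + z * px - inverse (real (Suc k)) \<le> (psi eps t x - psi eps (t - eps * a) (x - eps * z)) / eps"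
      by (intro key[OF epsn_pos epsn_lim conv t0 locmax Pder[unfolded S_def] cDt cDx Dt0 Dx0]) auto
    show ?thesis unfolding f_def g_def
      by (rule bound[OF mu(1) sg psi_eq ky])
  qed
  have gnn: "\<And>a z. 0 \<le> a \<Longrightarrow> 0 \<le> g a z"
    unfolding g_def using Phi_nonneg[OF mu(1)] omega_pos[OF sg] by (simp add: less_imp_le)
  have Phi_m[measurable]: "Phi mu \<in> borel_measurable borel" by (rule Phi_meas[OF mu(1)])
  have meas2: "(\<lambda>(a, z). f k a z) \<in> borel_measurable (lborel \<Otimes>\<^sub>M lborel)" for k
    unfolding f_def g_def omega_def by measurable
  have meas1: "f k a \<in> borel_measurable lborel" for k a
    unfolding f_def g_def omega_def by measurable
  have measG: "(\<lambda>a. \<integral>\<^sup>+ z. f k a z \<partial>lborel) \<in> borel_measurable lborel" for k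
    using lborel.borel_measurable_nn_integral[OF meas2[of k]] by simp
  have incf: "f k a z \<le> f l a z" if kl: "k \<le> l" for k l a z
  proof (cases "a \<in> {0..real (Suc k)} \<and> z \<in> {- real (Suc k)..real (Suc k)}")
    case False then show ?thesis by (auto simp: f_def)
  next
    case True
    have "real (Suc k) \<le> real (Suc l)" using kl by simp
    then have inl: "a \<in> {0..real (Suc l)}" "z \<in> {- real (Suc l)..real (Suc l)}" using True by auto
    have "inverse (real (Suc l)) \<le> inverse (real (Suc k))" using kl by (simp add: field_simps)
    then have "exp (- inverse (real (Suc k))) \<le> exp (- inverse (real (Suc l)))" by simp
    then have "g a z * exp (- inverse (real (Suc k))) \<le> g a z * exp (- inverse (real (Suc l)))"
      using gnn[of a z] True by (intro mult_left_mono) auto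
    then show ?thesis using True inl by (simp add: f_def ennreal_leI)
  qed
  have limf: "(\<lambda>k. f k a z) \<longlonglongrightarrow> ennreal (g a z) * indicator {0..} a" for a z
  proof (cases "0 \<le> a")
    case False then show ?thesis by (simp add: f_def)
  next
    case True
    have ev: "\<forall>\<^sub>F k in sequentially. ennreal (g a z * exp (- inverse (real (Suc k)))) = f k a z"
      using eventually_ge_at_top[of "nat \<lceil>max a \<bar>z\<bar>\<rceil>"]
    proof (rule eventually_mono)
      fix k assume "nat \<lceil>max a \<bar>z\<bar>\<rceil> \<le> k"
      then have "max a \<bar>z\<bar> \<le> real k" by linarith
      then have "a \<in> {0..real (Suc k)}" "z \<in> {- real (Suc k)..real (Suc k)}" using True by auto
      then show "ennreal (g a z * exp (- inverse (real (Suc k)))) = f k a z" by (simp add: f_def)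
    qed
    have "(\<lambda>k. g a z * exp (- inverse (real (Suc k)))) \<longlonglongrightarrow> g a z * exp (- 0)"
      by (intro tendsto_intros LIMSEQ_inverse_real_of_nat)
    then have "(\<lambda>k. ennreal (g a z * exp (- inverse (real (Suc k))))) \<longlonglongrightarrow> ennreal (g a z)"
      by (intro tendsto_ennrealI) simp
    then have "(\<lambda>k. f k a z) \<longlonglongrightarrow> ennreal (g a z)"
      using ev by (rule Lim_transform_eventually)
    then show ?thesis using True by simp
  qed
  have supf: "(SUP k. f k a z) = ennreal (g a z) * indicator {0..} a" for a z
    by (rule SUP_Lim[OF _ limf]) (auto simp: incseq_def intro: incf)
  have inner: "(\<integral>\<^sup>+ z. ennreal (g a z) \<partial>lborel) * indicator {0..} a = (SUP k. \<integral>\<^sup>+ z. f k a z \<partial>lborel)" for a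
  proof -
    have "(\<integral>\<^sup>+ z. ennreal (g a z) \<partial>lborel) * indicator {0..} a = (\<integral>\<^sup>+ z. ennreal (g a z) * indicator {0..} a \<partial>lborel)"
      by (cases "0 \<le> a") auto
    also have "\<dots> = (\<integral>\<^sup>+ z. (SUP k. f k a z) \<partial>lborel)" by (simp add: supf)
    also have "\<dots> = (SUP k. \<integral>\<^sup>+ z. f k a z \<partial>lborel)"
      by (rule nn_integral_monotone_convergence_SUP[OF _ meas1]) (auto simp: incseq_def le_fun_def intro: incf)
    finally show ?thesis .
  qed
  have "(\<integral>\<^sup>+ a\<in>{0..}. (\<integral>\<^sup>+ z. ennreal (Phi mu a * omega sg z
            * exp (a * pt + z * px)) \<partial>lborel) \<partial>lborel)
      = (\<integral>\<^sup>+ a. (SUP k. \<integral>\<^sup>+ z. f k a z \<partial>lborel) \<partial>lborel)"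
    using inner by (simp add: g_def)
  also have "\<dots> = (SUP k. \<integral>\<^sup>+ a. (\<integral>\<^sup>+ z. f k a z \<partial>lborel) \<partial>lborel)"
    by (rule nn_integral_monotone_convergence_SUP[OF _ measG])
       (auto simp: incseq_def le_fun_def intro!: nn_integral_mono incf)
  also have "\<dots> \<le> 1" by (rule SUP_least) (rule bnd)
  finally show ?thesis .
qed

end
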